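(* Let $q$ be a prime power. Any classical (possibly randomized) algorithm that solves the hidden linear structure problem over $\mathit{GF}(q)$ with error probability at most $\tfrac12$ must make $\Omega(\sqrt q)$ queries to the black box.
   Context: The (classical) hidden linear structure problem over $\mathit{GF}(q)$: one is given a black box computing the map $\mathit{GF}(q)\times\mathit{GF}(q)\to\mathit{GF}(q)\times\mathit{GF}(q)$, $(x,y)\mapsto(x,\pi(y+sx))$, where $\pi$ is an arbitrary (unknown) permutation of $\mathit{GF}(q)$ and $s\in\mathit{GF}(q)$ is unknown. The goal is to determine $s$. Complexity is measured by the number of queries to the black box. *)

theory Defs
  imports "HOL-Algebra.Ring" "HOL-Probability.Probability_Mass_Function"
begin

text \<open>The black box of the hidden linear structure problem over the finite field R with
  hidden slope s and hidden permutation \<pi> of the carrier: (x,y) maps to (x, \<pi> (y + s x)).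
  The first component x of the answer is the query itself, so only the second one is returned.
  Queries outside the field carrier are answered by a fixed constant (no information).\<close>
definition hls_box :: "nat ring \<Rightarrow> nat \<Rightarrow> (nat \<Rightarrow> nat) \<Rightarrow> nat \<times> nat \<Rightarrow> nat" where
  "hls_box R s \<pi> q =
     (if fst q \<in> carrier R \<and> snd q \<in> carrier R
      then \<pi> (snd q \<oplus>\<^bsub>R\<^esub> (s \<otimes>\<^bsub>R\<^esub> fst q)) else 0)"

text \<open>A deterministic adaptive query algorithm: the next query is a function of the list of
  answers obtained so far; the output is a function of the list of all answers.\<close>
type_synonym det_alg = "(nat list \<Rightarrow> nat \<times> nat) \<times> (nat list \<Rightarrow> nat)"

fun hls_answers :: "(nat \<times> nat \<Rightarrow> nat) \<Rightarrow> det_alg \<Rightarrow> nat \<Rightarrow> nat list" where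
  "hls_answers orc D 0 = []"
| "hls_answers orc D (Suc k) =
     hls_answers orc D k @ [orc (fst D (hls_answers orc D k))]"

definition hls_run :: "(nat \<times> nat \<Rightarrow> nat) \<Rightarrow> nat \<Rightarrow> det_alg \<Rightarrow> nat" where
  "hls_run orc T D = snd D (hls_answers orc D T)"

text \<open>A randomized algorithm is a probability distribution over deterministic algorithms.\<close>
definition hls_solves :: "nat ring \<Rightarrow> nat \<Rightarrow> det_alg pmf \<Rightarrow> bool" where
  "hls_solves R T A \<longleftrightarrow>
     (\<forall>s \<in> carrier R. \<forall>\<pi>. bij_betw \<pi> (carrier R) (carrier R) \<longrightarrow>
        measure_pmf.prob A {D. hls_run (hls_box R s \<pi>) T D \<noteq> s} \<le> 1/2)"

end

theory Submission
  imports Defs "HOL-Combinatorics.Permutations"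
begin


definition Lf :: "('a,'b) ring_scheme \<Rightarrow> 'a \<Rightarrow> 'a \<times> 'a \<Rightarrow> 'a" where
  "Lf R s p = snd p \<oplus>\<^bsub>R\<^esub> (s \<otimes>\<^bsub>R\<^esub> fst p)"

definition qpts :: "det_alg \<Rightarrow> nat list \<Rightarrow> (nat \<times> nat) set" where
  "qpts D t = (\<lambda>j. fst D (take j t)) ` {..<length t}"

definition pts :: "nat ring \<Rightarrow> det_alg \<Rightarrow> nat list \<Rightarrow> (nat \<times> nat) set" where
  "pts R D t = qpts D t \<inter> (carrier R \<times> carrier R)"

lemma length_ans[simp]: "length (hls_answers Or D k) = k"
  by (induction k) auto

lemma ans_prefix: "j \<le> k \<Longrightarrow> hls_answers Or D j = take j (hls_answers Or D k)"
proof (induction k)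
  case 0 then show ?case by simp
next
  case (Suc k)
  show ?case
  proof (cases "j = Suc k")
    case True then show ?thesis by simp
  next
    case False then have "j \<le> k" using Suc by simp
    then show ?thesis using Suc by simp
  qed
qed

lemma ans_transfer:
  assumes "hls_answers Or D (length t) = t" "\<forall>p\<in>qpts D t. Or' p = Or p"
  shows "hls_answers Or' D (length t) = t"
proof -
  have "\<forall>j. j \<le> length t \<longrightarrow> hls_answers Or' D j = take j t"
  proof (intro allI impI)
    fix j assume "j \<le> length t"
    then show "hls_answers Or' D j = take j t"
    proof (induction j)
      case 0 then show ?case by simp
    next
      case (Suc j)
      have j: "j < length t" using Suc by simp
      have e: "hls_answers Or D j = take j t"
        using ans_prefix[of j "length t" Or D] assms(1) j by simp
      have e2: "hls_answers Or D (Suc j) = take (Suc j) t"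
        using ans_prefix[of "Suc j" "length t" Or D] assms(1) Suc by simp
      have "fst D (take j t) \<in> qpts D t" unfolding qpts_def using j by auto
      then have "Or' (fst D (take j t)) = Or (fst D (take j t))" using assms(2) by simp
      then show ?case using Suc e e2 by simp
    qed
  qed
  then show ?thesis by simp
qed

lemma qpts_Suc: "qpts D (hls_answers Or D (Suc k)) = insert (fst D (hls_answers Or D k)) (qpts D (hls_answers Or D k))"
proof -
  have "qpts D (hls_answers Or D (Suc k)) = (\<lambda>j. fst D (take j (hls_answers Or D (Suc k)))) ` {..<Suc k}"
    unfolding qpts_def by simp
  also have "\<dots> = (\<lambda>j. fst D (hls_answers Or D j)) ` {..<Suc k}"
    by (intro image_cong refl) (simp add: ans_prefix[symmetric])
  also have "\<dots> = insert (fst D (hls_answers Or D k)) ((\<lambda>j. fst D (hls_answers Or D j)) ` {..<k})"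
    by (simp add: lessThan_Suc)
  also have "(\<lambda>j. fst D (hls_answers Or D j)) ` {..<k} = qpts D (hls_answers Or D k)"
    unfolding qpts_def by (intro image_cong) (auto simp add: ans_prefix[symmetric])
  finally show ?thesis .
qed

lemma card_qpts: "card (qpts D t) \<le> length t" "finite (qpts D t)"
  unfolding qpts_def using card_image_le[of "{..<length t}"] by auto

lemma qpts_0[simp]: "qpts D [] = {}" unfolding qpts_def by simp


lemma (in cring) t1:
  assumes [simp]: "a \<in> carrier R" "b \<in> carrier R" "c \<in> carrier R" "d \<in> carrier R" "y1 \<in> carrier R" "y2 \<in> carrier R"
  shows "(a \<ominus> b) \<otimes> (c \<ominus> d) = ((y1 \<oplus> a \<otimes> c) \<ominus> (y2 \<oplus> a \<otimes> d)) \<ominus> ((y1 \<oplus> b \<otimes> c) \<ominus> (y2 \<oplus> b \<otimes> d))"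
  by (simp add: minus_eq r_distr l_distr minus_add r_minus l_minus a_ac m_ac r_neg1 r_neg2)

lemma (in ring) minus_eq0:
  assumes "a \<in> carrier R" "b \<in> carrier R"
  shows "(a \<ominus> b = \<zero>) = (a = b)"
proof
  assume h: "a \<ominus> b = \<zero>"
  have "a = (a \<ominus> b) \<oplus> b" using assms by (simp add: minus_eq add.m_assoc l_neg)
  then show "a = b" using h assms by simp
next
  assume "a = b" then show "a \<ominus> b = \<zero>" using assms by (simp add: r_neg minus_eq)
qed

lemma (in ring) minus_self: "a \<in> carrier R \<Longrightarrow> a \<ominus> a = \<zero>"
  by (simp add: r_neg minus_eq)

lemma (in cring) Lf_closed: "s \<in> carrier R \<Longrightarrow> p \<in> carrier R \<times> carrier R \<Longrightarrow> Lf R s p \<in> carrier R"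
  unfolding Lf_def by auto

lemma (in domain) Lf_unique:
  assumes p: "p1 \<in> carrier R \<times> carrier R" "p2 \<in> carrier R \<times> carrier R" "p1 \<noteq> p2"
    and s: "s1 \<in> carrier R" "s2 \<in> carrier R"
    and e: "Lf R s1 p1 = Lf R s1 p2" "Lf R s2 p1 = Lf R s2 p2"
  shows "s1 = s2"
proof -
  obtain x1 y1 x2 y2 where P: "p1 = (x1,y1)" "p2 = (x2,y2)" by fastforce
  have c: "x1 \<in> carrier R" "y1 \<in> carrier R" "x2 \<in> carrier R" "y2 \<in> carrier R" using p P by auto
  have e1: "y1 \<oplus> s1 \<otimes> x1 = y2 \<oplus> s1 \<otimes> x2" and e2: "y1 \<oplus> s2 \<otimes> x1 = y2 \<oplus> s2 \<otimes> x2"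
    using e P unfolding Lf_def by auto
  have "(s1 \<ominus> s2) \<otimes> (x1 \<ominus> x2) = \<zero>"
    using t1[of s1 s2 x1 x2 y1 y2] e1 e2 c s by (simp add: minus_self)
  then have "s1 \<ominus> s2 = \<zero> \<or> x1 \<ominus> x2 = \<zero>" using integral c s by (meson minus_closed)
  moreover have "x1 \<noteq> x2"
  proof
    assume "x1 = x2"
    then have "y1 = y2" using e1 c s by simp
    then show False using \<open>x1 = x2\<close> P p by simp
  qed
  moreover have "x1 \<ominus> x2 \<noteq> \<zero>" using \<open>x1 \<noteq> x2\<close> minus_eq0[OF c(1) c(3)] by blast
  ultimately have "s1 \<ominus> s2 = \<zero>" by blast
  then show ?thesis using minus_eq0[OF s] by blast
qed

lemma theta_ex:
  assumes "finite Q" "finite X" "inj_on f X" "inj_on g X" "f ` X \<subseteq> Q" "g ` X \<subseteq> Q"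
  shows "\<exists>\<theta>. \<theta> permutes Q \<and> (\<forall>p\<in>X. \<theta> (g p) = f p)"
proof -
  define A where "A = g ` X"
  define B where "B = f ` X"
  define h where "h = f \<circ> inv_into X g"
  have bg: "bij_betw g X A" using assms A_def by (simp add: inj_on_imp_bij_betw)
  have bf: "bij_betw f X B" using assms B_def by (simp add: inj_on_imp_bij_betw)
  have bh: "bij_betw h A B" unfolding h_def
    using bij_betw_trans[OF bij_betw_inv_into[OF bg] bf] .
  have cA: "card A = card X" "card B = card X" using bij_betw_same_card[OF bg] bij_betw_same_card[OF bf] by simp_all
  have AQ: "A \<subseteq> Q" "B \<subseteq> Q" using assms A_def B_def by auto
  have "card (Q - A) = card (Q - B)"
  proof -
    have fA: "finite A" "finite B" using AQ assms(1) finite_subset by blast+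
    show ?thesis using card_Diff_subset[OF fA(1) AQ(1)] card_Diff_subset[OF fA(2) AQ(2)] cA by simp
  qed
  then obtain k where bk: "bij_betw k (Q - A) (Q - B)"
    using finite_same_card_bij[of "Q - A" "Q - B"] assms(1) by auto
  define \<theta> where "\<theta> = (\<lambda>z. if z \<in> A then h z else if z \<in> Q then k z else z)"
  have "bij_betw (\<lambda>z. if z \<in> A then h z else k z) (A \<union> (Q - A)) (B \<union> (Q - B))"
    by (rule bij_betw_disjoint_Un[OF bh bk]) blast+
  then have "bij_betw (\<lambda>z. if z \<in> A then h z else k z) Q Q" using AQ
    by (simp add: Un_absorb1 sup.absorb2)
  then have "bij_betw \<theta> Q Q" unfolding \<theta>_def
    by (rule bij_betw_cong[THEN iffD1, rotated]) (simp add: \<theta>_def)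
  then have "\<theta> permutes Q" by (rule bij_imp_permutes) (use AQ in \<open>auto simp add: \<theta>_def\<close>)
  moreover have "\<forall>p\<in>X. \<theta> (g p) = f p"
    using assms(4) by (simp add: \<theta>_def A_def h_def)
  ultimately show ?thesis by blast
qed



definition CF :: "nat ring \<Rightarrow> det_alg \<Rightarrow> nat \<Rightarrow> nat list \<Rightarrow> bool" where
  "CF R D s t = inj_on (Lf R s) (pts R D t)"

definition Bset :: "nat ring \<Rightarrow> det_alg \<Rightarrow> nat list \<Rightarrow> nat set" where
  "Bset R D t = {s \<in> carrier R. \<not> CF R D s t}"

definition th :: "nat ring \<Rightarrow> det_alg \<Rightarrow> nat \<Rightarrow> nat \<Rightarrow> nat list \<Rightarrow> nat \<Rightarrow> nat" where
  "th R D s s' t = (SOME \<theta>. \<theta> permutes carrier R \<and> (\<forall>p\<in>pts R D t. \<theta> (Lf R s' p) = Lf R s p))"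

lemma th_props:
  assumes "domain R" "finite (carrier R)" "s \<in> carrier R" "s' \<in> carrier R" "CF R D s t" "CF R D s' t"
  shows "th R D s s' t permutes carrier R \<and> (\<forall>p\<in>pts R D t. th R D s s' t (Lf R s' p) = Lf R s p)"
proof -
  interpret domain R by fact
  have "finite (pts R D t)" unfolding pts_def using card_qpts(2) by blast
  moreover have "Lf R s ` pts R D t \<subseteq> carrier R" "Lf R s' ` pts R D t \<subseteq> carrier R"
    using Lf_closed assms unfolding pts_def by auto
  ultimately have "\<exists>\<theta>. \<theta> permutes carrier R \<and> (\<forall>p\<in>pts R D t. \<theta> (Lf R s' p) = Lf R s p)"
    using theta_ex[of "carrier R" "pts R D t" "Lf R s" "Lf R s'"] assms unfolding CF_def by blast
  then show ?thesis unfolding th_def by (rule someI_ex)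
qed

lemma transfer_th:
  assumes "domain R" "finite (carrier R)" "s \<in> carrier R" "s' \<in> carrier R" "CF R D s t" "CF R D s' t"
    "hls_answers (hls_box R s \<pi>) D (length t) = t"
  shows "hls_answers (hls_box R s' (\<pi> \<circ> th R D s s' t)) D (length t) = t"
proof (rule ans_transfer[OF assms(7)], rule ballI)
  fix p assume p: "p \<in> qpts D t"
  show "hls_box R s' (\<pi> \<circ> th R D s s' t) p = hls_box R s \<pi> p"
  proof (cases "p \<in> carrier R \<times> carrier R")
    case True
    then have "p \<in> pts R D t" using p unfolding pts_def by blast
    then have "th R D s s' t (Lf R s' p) = Lf R s p" using th_props[OF assms(1-6)] by blast
    then show ?thesis using True unfolding hls_box_def Lf_def by (auto simp: mem_Times_iff)
  next
    case False
    then show ?thesis unfolding hls_box_def by (auto simp: mem_Times_iff)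
  qed
qed

lemma card_Bset:
  assumes "domain R"
  shows "card (Bset R D t) \<le> (length t)^2"
proof -
  interpret domain R by fact
  define g where "g = (\<lambda>(p1,p2). SOME s. s \<in> carrier R \<and> Lf R s p1 = Lf R s p2)"
  have sub: "Bset R D t \<subseteq> g ` (pts R D t \<times> pts R D t)"
  proof
    fix s assume "s \<in> Bset R D t"
    then have s: "s \<in> carrier R" and ni: "\<not> inj_on (Lf R s) (pts R D t)"
      unfolding Bset_def CF_def by auto
    then obtain p1 p2 where pp: "p1 \<in> pts R D t" "p2 \<in> pts R D t" "p1 \<noteq> p2" "Lf R s p1 = Lf R s p2"
      unfolding inj_on_def by blast
    have ex: "\<exists>s. s \<in> carrier R \<and> Lf R s p1 = Lf R s p2" using s pp by blast
    have "g (p1,p2) \<in> carrier R \<and> Lf R (g (p1,p2)) p1 = Lf R (g (p1,p2)) p2"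
      unfolding g_def using someI_ex[OF ex] by simp
    then have "g (p1,p2) = s"
      using Lf_unique[of p1 p2 "g (p1,p2)" s] pp s unfolding pts_def by blast
    then show "s \<in> g ` (pts R D t \<times> pts R D t)" using pp by force
  qed
  have fin: "finite (pts R D t)" unfolding pts_def using card_qpts(2) by blast
  have "card (Bset R D t) \<le> card (g ` (pts R D t \<times> pts R D t))"
    using sub fin by (intro card_mono) auto
  also have "\<dots> \<le> card (pts R D t \<times> pts R D t)" by (rule card_image_le) (use fin in auto)
  also have "\<dots> = card (pts R D t) ^ 2" by (simp add: card_cartesian_product power2_eq_square)
  also have "\<dots> \<le> (length t)^2"
  proof -
    have "card (pts R D t) \<le> card (qpts D t)" unfolding pts_def
      using card_qpts(2) by (intro card_mono) auto
    then show ?thesis using card_qpts(1)[of D t] by (intro power_mono) auto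
  qed
  finally show ?thesis .
qed



lemma count_E:
  assumes dom: "domain R" and fin: "finite (carrier R)"
  shows "card {(s,\<pi>) \<in> carrier R \<times> {\<pi>. \<pi> permutes carrier R}.
            snd D (hls_answers (hls_box R s \<pi>) D T) = s \<and> CF R D s (hls_answers (hls_box R s \<pi>) D T)}
          * (card (carrier R) - T^2) \<le> card (carrier R) * card {\<pi>. \<pi> permutes carrier R}"
proof -
  interpret domain R by fact
  define Q where "Q = carrier R"
  define P where "P = {\<pi>. \<pi> permutes Q}"
  define ans where "ans = (\<lambda>s \<pi>. hls_answers (hls_box R s \<pi>) D T)"
  define E where "E = {(s,\<pi>) \<in> Q \<times> P. snd D (ans s \<pi>) = s \<and> CF R D s (ans s \<pi>)}"
  define Dm where "Dm = Sigma E (\<lambda>(s,\<pi>). Q - Bset R D (ans s \<pi>))"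
  define \<Phi> where "\<Phi> = (\<lambda>((s,\<pi>),s'). (s', \<pi> \<circ> th R D s s' (ans s \<pi>)))"
  have finP: "finite P" unfolding P_def Q_def using fin finite_permutations by blast
  have finQ: "finite Q" using fin Q_def by simp
  have finE: "finite E"
    by (rule finite_subset[of _ "Q \<times> P"]) (use finQ finP in \<open>auto simp: E_def\<close>)
  have lenans: "length (ans s \<pi>) = T" for s \<pi> unfolding ans_def by simp
  have key: "s' \<in> Q \<Longrightarrow> s' \<notin> Bset R D (ans s \<pi>) \<Longrightarrow> (s,\<pi>) \<in> E \<Longrightarrow>
     ans s' (\<pi> \<circ> th R D s s' (ans s \<pi>)) = ans s \<pi> \<and> th R D s s' (ans s \<pi>) permutes Q" for s \<pi> s'
  proof -
    assume a: "s' \<in> Q" "s' \<notin> Bset R D (ans s \<pi>)" "(s,\<pi>) \<in> E"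
    have cf: "CF R D s' (ans s \<pi>)" using a unfolding Bset_def Q_def by auto
    have cf2: "CF R D s (ans s \<pi>)" "s \<in> Q" using a unfolding E_def by auto
    have "hls_answers (hls_box R s \<pi>) D (length (ans s \<pi>)) = ans s \<pi>"
      unfolding ans_def by simp
    from transfer_th[OF dom fin _ _ cf2(1) cf this] a cf2
    have "hls_answers (hls_box R s' (\<pi> \<circ> th R D s s' (ans s \<pi>))) D (length (ans s \<pi>)) = ans s \<pi>"
      unfolding Q_def by blast
    then show ?thesis using th_props[OF dom fin _ _ cf2(1) cf] a cf2 unfolding Q_def ans_def
      by simp
  qed
  have inj: "inj_on \<Phi> Dm"
  proof (rule inj_onI)
    fix a b assume a: "a \<in> Dm" and b: "b \<in> Dm" and eq: "\<Phi> a = \<Phi> b"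
    obtain s1 \<pi>1 s1' where A: "a = ((s1,\<pi>1),s1')" by (metis prod.collapse)
    obtain s2 \<pi>2 s2' where B: "b = ((s2,\<pi>2),s2')" by (metis prod.collapse)
    have m1: "(s1,\<pi>1) \<in> E" "s1' \<in> Q" "s1' \<notin> Bset R D (ans s1 \<pi>1)" using a A unfolding Dm_def by auto
    have m2: "(s2,\<pi>2) \<in> E" "s2' \<in> Q" "s2' \<notin> Bset R D (ans s2 \<pi>2)" using b B unfolding Dm_def by auto
    have e1: "s1' = s2'" and e2: "\<pi>1 \<circ> th R D s1 s1' (ans s1 \<pi>1) = \<pi>2 \<circ> th R D s2 s2' (ans s2 \<pi>2)"
      using eq A B unfolding \<Phi>_def by auto
    have k1: "ans s1' (\<pi>1 \<circ> th R D s1 s1' (ans s1 \<pi>1)) = ans s1 \<pi>1" using key m1 by blast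
    have k2: "ans s2' (\<pi>2 \<circ> th R D s2 s2' (ans s2 \<pi>2)) = ans s2 \<pi>2" using key m2 by blast
    have t: "ans s1 \<pi>1 = ans s2 \<pi>2" using k1 k2 e1 e2 by simp
    have s: "s1 = s2" using m1(1) m2(1) t unfolding E_def by auto
    have "th R D s1 s1' (ans s1 \<pi>1) permutes Q" using key m1 by blast
    then have "surj (th R D s1 s1' (ans s1 \<pi>1))" by (rule permutes_surj)
    moreover have "\<pi>1 \<circ> th R D s1 s1' (ans s1 \<pi>1) = \<pi>2 \<circ> th R D s1 s1' (ans s1 \<pi>1)"
      using e2 e1 s t by simp
    ultimately have "\<pi>1 = \<pi>2" using surj_fun_eq[of "th R D s1 s1' (ans s1 \<pi>1)" UNIV \<pi>1 \<pi>2] by simp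
    then show "a = b" using A B e1 s by simp
  qed
  have img: "\<Phi> ` Dm \<subseteq> Q \<times> P"
  proof
    fix x assume "x \<in> \<Phi> ` Dm"
    then obtain s \<pi> s' where x: "x = \<Phi> ((s,\<pi>),s')" and m: "(s,\<pi>) \<in> E" "s' \<in> Q" "s' \<notin> Bset R D (ans s \<pi>)"
      unfolding Dm_def by auto
    have "\<pi> permutes Q" using m unfolding E_def P_def by auto
    moreover have "th R D s s' (ans s \<pi>) permutes Q" using key m by blast
    ultimately have "\<pi> \<circ> th R D s s' (ans s \<pi>) permutes Q" by (metis permutes_compose)
    then show "x \<in> Q \<times> P" using x m unfolding \<Phi>_def P_def by auto
  qed
  have "card Dm \<le> card (Q \<times> P)"
    using card_inj_on_le[OF inj img] finQ finP by simp
  also have "\<dots> = card Q * card P" by (rule card_cartesian_product)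
  finally have c1: "card Dm \<le> card Q * card P" .
  have "card Dm = (\<Sum>e\<in>E. card ((\<lambda>(s,\<pi>). Q - Bset R D (ans s \<pi>)) e))"
    unfolding Dm_def using finE finQ by (intro card_SigmaI) auto
  also have "\<dots> \<ge> (\<Sum>e\<in>E. card Q - T^2)"
  proof (intro sum_mono)
    fix e assume "e \<in> E"
    obtain s \<pi> where e: "e = (s,\<pi>)" by fastforce
    have "card (Bset R D (ans s \<pi>)) \<le> T^2" using card_Bset[OF dom, of D "ans s \<pi>"] lenans by simp
    moreover have "card (Q - Bset R D (ans s \<pi>)) = card Q - card (Bset R D (ans s \<pi>))"
      using finQ by (intro card_Diff_subset) (auto simp: Bset_def Q_def intro: finite_subset[of _ Q])
    ultimately show "card Q - T^2 \<le> card ((\<lambda>(s,\<pi>). Q - Bset R D (ans s \<pi>)) e)" using e by simp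
  qed
  finally have "card E * (card Q - T^2) \<le> card Q * card P" using c1 by (simp add: mult.commute)
  then show ?thesis unfolding E_def Q_def P_def ans_def by simp
qed


definition idx :: "nat ring \<Rightarrow> det_alg \<Rightarrow> nat \<Rightarrow> nat list \<Rightarrow> nat" where
  "idx R D s t = (SOME i. i < length t \<and> fst D t \<in> carrier R \<times> carrier R \<and> fst D (take i t) \<in> carrier R \<times> carrier R \<and>
      fst D (take i t) \<noteq> fst D t \<and> Lf R s (fst D (take i t)) = Lf R s (fst D t))"

lemma idx_ex:
  assumes "CF R D s (hls_answers Or D k)" "\<not> CF R D s (hls_answers Or D (Suc k))"
  shows "\<exists>i. i < length (hls_answers Or D k) \<and> fst D (hls_answers Or D k) \<in> carrier R \<times> carrier R \<and> fst D (take i (hls_answers Or D k)) \<in> carrier R \<times> carrier R \<and>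
      fst D (take i (hls_answers Or D k)) \<noteq> fst D (hls_answers Or D k) \<and>
      Lf R s (fst D (take i (hls_answers Or D k))) = Lf R s (fst D (hls_answers Or D k))"
proof -
  define t where "t = hls_answers Or D k"
  define p where "p = fst D t"
  have q: "qpts D (hls_answers Or D (Suc k)) = insert p (qpts D t)"
    unfolding p_def t_def by (rule qpts_Suc)
  show ?thesis
  proof (cases "p \<in> carrier R \<times> carrier R")
    case False
    then have "pts R D (hls_answers Or D (Suc k)) = pts R D t" unfolding pts_def q by auto
    then have "CF R D s (hls_answers Or D (Suc k)) = CF R D s t" unfolding CF_def by simp
    then show ?thesis using assms unfolding t_def by blast
  next
    case True
    then have "pts R D (hls_answers Or D (Suc k)) = insert p (pts R D t)" unfolding pts_def q by auto
    then have "Lf R s p \<in> Lf R s ` (pts R D t - {p})"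
      using assms unfolding t_def CF_def by (simp add: t_def)
    then obtain x where "x \<in> pts R D t - {p}" "Lf R s p = Lf R s x"
      by (rule imageE)
    then have x: "x \<in> pts R D t" "x \<noteq> p" "Lf R s x = Lf R s p" by auto
    then obtain i where i: "i < length t" "x = fst D (take i t)" unfolding pts_def qpts_def by auto
    show ?thesis using x i True unfolding t_def p_def pts_def by (intro exI[of _ i]) simp
  qed
qed

lemma count_F:
  assumes dom: "domain R" and fin: "finite (carrier R)"
  shows "card {(s,\<pi>) \<in> carrier R \<times> {\<pi>. \<pi> permutes carrier R}.
            CF R D s (hls_answers (hls_box R s \<pi>) D k) \<and> \<not> CF R D s (hls_answers (hls_box R s \<pi>) D (Suc k))}
          * (card (carrier R) - k^2) \<le> card (carrier R) * card {\<pi>. \<pi> permutes carrier R} * k"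
proof -
  interpret domain R by fact
  define Q where "Q = carrier R"
  define P where "P = {\<pi>. \<pi> permutes Q}"
  define ans where "ans = (\<lambda>s \<pi>. hls_answers (hls_box R s \<pi>) D k)"
  define E where "E = {(s,\<pi>) \<in> Q \<times> P. CF R D s (ans s \<pi>) \<and> \<not> CF R D s (hls_answers (hls_box R s \<pi>) D (Suc k))}"
  define Dm where "Dm = Sigma E (\<lambda>(s,\<pi>). Q - Bset R D (ans s \<pi>))"
  define \<Phi> where "\<Phi> = (\<lambda>((s,\<pi>),s'). ((s', \<pi> \<circ> th R D s s' (ans s \<pi>)), idx R D s (ans s \<pi>)))"
  have finP: "finite P" unfolding P_def Q_def using fin finite_permutations by blast
  have finQ: "finite Q" using fin Q_def by simp
  have finE: "finite E"
    by (rule finite_subset[of _ "Q \<times> P"]) (use finQ finP in \<open>auto simp: E_def\<close>)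
  have lenans: "length (ans s \<pi>) = k" for s \<pi> unfolding ans_def by simp
  have key: "s' \<in> Q \<Longrightarrow> s' \<notin> Bset R D (ans s \<pi>) \<Longrightarrow> (s,\<pi>) \<in> E \<Longrightarrow>
     ans s' (\<pi> \<circ> th R D s s' (ans s \<pi>)) = ans s \<pi> \<and> th R D s s' (ans s \<pi>) permutes Q" for s \<pi> s'
  proof -
    assume a: "s' \<in> Q" "s' \<notin> Bset R D (ans s \<pi>)" "(s,\<pi>) \<in> E"
    have cf: "CF R D s' (ans s \<pi>)" using a unfolding Bset_def Q_def by auto
    have cf2: "CF R D s (ans s \<pi>)" "s \<in> Q" using a unfolding E_def by auto
    have "hls_answers (hls_box R s \<pi>) D (length (ans s \<pi>)) = ans s \<pi>"
      unfolding ans_def by simp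
    from transfer_th[OF dom fin _ _ cf2(1) cf this] a cf2
    have "hls_answers (hls_box R s' (\<pi> \<circ> th R D s s' (ans s \<pi>))) D (length (ans s \<pi>)) = ans s \<pi>"
      unfolding Q_def by blast
    then show ?thesis using th_props[OF dom fin _ _ cf2(1) cf] a cf2 unfolding Q_def ans_def
      by simp
  qed
  have idxp: "(s,\<pi>) \<in> E \<Longrightarrow> idx R D s (ans s \<pi>) < k \<and> fst D (ans s \<pi>) \<in> Q \<times> Q \<and>
      fst D (take (idx R D s (ans s \<pi>)) (ans s \<pi>)) \<in> Q \<times> Q \<and>
      fst D (take (idx R D s (ans s \<pi>)) (ans s \<pi>)) \<noteq> fst D (ans s \<pi>) \<and>
      Lf R s (fst D (take (idx R D s (ans s \<pi>)) (ans s \<pi>))) = Lf R s (fst D (ans s \<pi>))" for s \<pi>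
  proof -
    assume "(s,\<pi>) \<in> E"
    then have "CF R D s (hls_answers (hls_box R s \<pi>) D k)" "\<not> CF R D s (hls_answers (hls_box R s \<pi>) D (Suc k))"
      unfolding E_def ans_def by auto
    from someI_ex[OF idx_ex[OF this]] show ?thesis unfolding idx_def[symmetric] Q_def ans_def
      by simp
  qed
  have inj: "inj_on \<Phi> Dm"
  proof (rule inj_onI)
    fix a b assume a: "a \<in> Dm" and b: "b \<in> Dm" and eq: "\<Phi> a = \<Phi> b"
    obtain s1 \<pi>1 s1' where A: "a = ((s1,\<pi>1),s1')" by (metis prod.collapse)
    obtain s2 \<pi>2 s2' where B: "b = ((s2,\<pi>2),s2')" by (metis prod.collapse)
    have m1: "(s1,\<pi>1) \<in> E" "s1' \<in> Q" "s1' \<notin> Bset R D (ans s1 \<pi>1)" using a A unfolding Dm_def by auto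
    have m2: "(s2,\<pi>2) \<in> E" "s2' \<in> Q" "s2' \<notin> Bset R D (ans s2 \<pi>2)" using b B unfolding Dm_def by auto
    have e1: "s1' = s2'" and e2: "\<pi>1 \<circ> th R D s1 s1' (ans s1 \<pi>1) = \<pi>2 \<circ> th R D s2 s2' (ans s2 \<pi>2)"
      and e3: "idx R D s1 (ans s1 \<pi>1) = idx R D s2 (ans s2 \<pi>2)"
      using eq A B unfolding \<Phi>_def by auto
    have k1: "ans s1' (\<pi>1 \<circ> th R D s1 s1' (ans s1 \<pi>1)) = ans s1 \<pi>1" using key m1 by blast
    have k2: "ans s2' (\<pi>2 \<circ> th R D s2 s2' (ans s2 \<pi>2)) = ans s2 \<pi>2" using key m2 by blast
    have t: "ans s1 \<pi>1 = ans s2 \<pi>2" using k1 k2 e1 e2 by simp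
    have i1: "fst D (take (idx R D s1 (ans s1 \<pi>1)) (ans s1 \<pi>1)) \<in> Q \<times> Q"
      "fst D (take (idx R D s1 (ans s1 \<pi>1)) (ans s1 \<pi>1)) \<noteq> fst D (ans s1 \<pi>1)"
      "Lf R s1 (fst D (take (idx R D s1 (ans s1 \<pi>1)) (ans s1 \<pi>1))) = Lf R s1 (fst D (ans s1 \<pi>1))"
      using idxp[OF m1(1)] by auto
    have i2: "Lf R s2 (fst D (take (idx R D s1 (ans s1 \<pi>1)) (ans s1 \<pi>1))) = Lf R s2 (fst D (ans s1 \<pi>1))"
      "fst D (ans s1 \<pi>1) \<in> Q \<times> Q"
      using idxp[OF m2(1)] e3 t by (auto simp: mem_Times_iff)
    have sQ: "s1 \<in> Q" "s2 \<in> Q" using m1(1) m2(1) unfolding E_def by auto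
    have s: "s1 = s2" using Lf_unique[OF _ _ i1(2) _ _ i1(3) i2(1)] i1(1) i2(2) sQ unfolding Q_def by blast
    have "th R D s1 s1' (ans s1 \<pi>1) permutes Q" using key m1 by blast
    then have "surj (th R D s1 s1' (ans s1 \<pi>1))" by (rule permutes_surj)
    moreover have "\<pi>1 \<circ> th R D s1 s1' (ans s1 \<pi>1) = \<pi>2 \<circ> th R D s1 s1' (ans s1 \<pi>1)"
      using e2 e1 s t by simp
    ultimately have "\<pi>1 = \<pi>2" using surj_fun_eq[of "th R D s1 s1' (ans s1 \<pi>1)" UNIV \<pi>1 \<pi>2] by simp
    then show "a = b" using A B e1 s by simp
  qed
  have img: "\<Phi> ` Dm \<subseteq> (Q \<times> P) \<times> {..<k}"
  proof
    fix x assume "x \<in> \<Phi> ` Dm"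
    then obtain s \<pi> s' where x: "x = \<Phi> ((s,\<pi>),s')" and m: "(s,\<pi>) \<in> E" "s' \<in> Q" "s' \<notin> Bset R D (ans s \<pi>)"
      unfolding Dm_def by auto
    have "\<pi> permutes Q" using m unfolding E_def P_def by auto
    moreover have "th R D s s' (ans s \<pi>) permutes Q" using key m by blast
    ultimately have "\<pi> \<circ> th R D s s' (ans s \<pi>) permutes Q" by (metis permutes_compose)
    moreover have "idx R D s (ans s \<pi>) < k" using idxp[OF m(1)] by blast
    ultimately show "x \<in> (Q \<times> P) \<times> {..<k}" using x m unfolding \<Phi>_def P_def by auto
  qed
  have "card Dm \<le> card ((Q \<times> P) \<times> {..<k})"
    using card_inj_on_le[OF inj img] finQ finP by simp
  also have "\<dots> = card Q * card P * k" by (simp add: card_cartesian_product)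
  finally have c1: "card Dm \<le> card Q * card P * k" .
  have "card Dm = (\<Sum>e\<in>E. card ((\<lambda>(s,\<pi>). Q - Bset R D (ans s \<pi>)) e))"
    unfolding Dm_def using finE finQ by (intro card_SigmaI) auto
  also have "\<dots> \<ge> (\<Sum>e\<in>E. card Q - k^2)"
  proof (intro sum_mono)
    fix e assume "e \<in> E"
    obtain s \<pi> where e: "e = (s,\<pi>)" by fastforce
    have "card (Bset R D (ans s \<pi>)) \<le> k^2" using card_Bset[OF dom, of D "ans s \<pi>"] lenans by simp
    moreover have "card (Q - Bset R D (ans s \<pi>)) = card Q - card (Bset R D (ans s \<pi>))"
      using finQ by (intro card_Diff_subset) (auto simp: Bset_def Q_def intro: finite_subset[of _ Q])
    ultimately show "card Q - k^2 \<le> card ((\<lambda>(s,\<pi>). Q - Bset R D (ans s \<pi>)) e)" using e by simp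
  qed
  finally have "card E * (card Q - k^2) \<le> card Q * card P * k" using c1 by (simp add: mult.commute)
  then show ?thesis unfolding E_def Q_def P_def ans_def by simp
qed


lemma first_change: "P 0 \<Longrightarrow> \<not> P T \<Longrightarrow> \<exists>k<T. P k \<and> \<not> P (Suc k)"
proof (induction T)
  case 0 then show ?case by simp
next
  case (Suc T)
  then show ?case by (cases "P T") (auto intro: less_SucI)
qed

lemma count_S:
  assumes dom: "domain R" and fin: "finite (carrier R)"
  shows "card {(s,\<pi>) \<in> carrier R \<times> {\<pi>. \<pi> permutes carrier R}.
            snd D (hls_answers (hls_box R s \<pi>) D T) = s}
          * (card (carrier R) - T^2) \<le> card (carrier R) * card {\<pi>. \<pi> permutes carrier R} * (1 + T^2)"
proof -
  define Q where "Q = carrier R"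
  define P where "P = {\<pi>. \<pi> permutes Q}"
  define ans where "ans = (\<lambda>k s \<pi>. hls_answers (hls_box R s \<pi>) D k)"
  define S where "S = {(s,\<pi>) \<in> Q \<times> P. snd D (ans T s \<pi>) = s}"
  define E where "E = {(s,\<pi>) \<in> Q \<times> P. snd D (ans T s \<pi>) = s \<and> CF R D s (ans T s \<pi>)}"
  define F where "F = (\<lambda>k. {(s,\<pi>) \<in> Q \<times> P. CF R D s (ans k s \<pi>) \<and> \<not> CF R D s (ans (Suc k) s \<pi>)})"
  define q where "q = card Q"
  define N where "N = card P"
  have finP: "finite P" unfolding P_def Q_def using fin finite_permutations by blast
  have finQ: "finite Q" using fin Q_def by simp
  have fin2: "finite X" if "X \<subseteq> Q \<times> P" for X
    using finite_subset[OF that] finQ finP by blast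
  have cE: "card E * (q - T^2) \<le> q * N"
    using count_E[OF dom fin, of D T] unfolding E_def Q_def P_def ans_def q_def N_def by simp
  have cF: "card (F k) * (q - k^2) \<le> q * N * k" for k
    using count_F[OF dom fin, of D k] unfolding F_def Q_def P_def ans_def q_def N_def by simp
  have sub: "S \<subseteq> E \<union> (\<Union>k\<in>{..<T}. F k)"
  proof
    fix x assume x: "x \<in> S"
    obtain s \<pi> where xe: "x = (s,\<pi>)" by fastforce
    show "x \<in> E \<union> (\<Union>k\<in>{..<T}. F k)"
    proof (cases "CF R D s (ans T s \<pi>)")
      case True then show ?thesis using x xe unfolding S_def E_def by auto
    next
      case False
      have "CF R D s (ans 0 s \<pi>)" unfolding CF_def pts_def ans_def by simp
      then obtain k where "k < T" "CF R D s (ans k s \<pi>)" "\<not> CF R D s (ans (Suc k) s \<pi>)"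
        using first_change[of "\<lambda>k. CF R D s (ans k s \<pi>)" T] False by blast
      then show ?thesis using x xe unfolding S_def F_def by auto
    qed
  qed
  have "card S \<le> card (E \<union> (\<Union>k\<in>{..<T}. F k))"
    by (rule card_mono[OF _ sub]) (auto intro!: fin2 simp: E_def F_def)
  also have "\<dots> \<le> card E + card (\<Union>k\<in>{..<T}. F k)" by (rule card_Un_le)
  also have "card (\<Union>k\<in>{..<T}. F k) \<le> (\<Sum>k<T. card (F k))" by (rule card_UN_le) simp
  finally have cS: "card S \<le> card E + (\<Sum>k<T. card (F k))" by simp
  have "card S * (q - T^2) \<le> (card E + (\<Sum>k<T. card (F k))) * (q - T^2)"
    using cS by (rule mult_right_mono) simp
  also have "\<dots> = card E * (q - T^2) + (\<Sum>k<T. card (F k) * (q - T^2))"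
    by (simp add: add_mult_distrib sum_distrib_right)
  also have "\<dots> \<le> q * N + (\<Sum>k<T. q * N * k)"
  proof (rule add_mono[OF cE], rule sum_mono)
    fix k assume "k \<in> {..<T}"
    then have "k^2 \<le> T^2" by (simp add: power_mono)
    then have "q - T^2 \<le> q - k^2" by (rule diff_le_mono2)
    then have "card (F k) * (q - T^2) \<le> card (F k) * (q - k^2)" by (rule mult_left_mono) simp
    then show "card (F k) * (q - T^2) \<le> q * N * k" using cF[of k] by linarith
  qed
  also have "(\<Sum>k<T. q * N * k) = q * N * (\<Sum>k<T. k)" by (simp add: sum_distrib_left)
  also have "(\<Sum>k<T. k) \<le> T^2"
  proof -
    have "(\<Sum>k<T. k) \<le> (\<Sum>k<T. T)" by (rule sum_mono) simp
    then show ?thesis by (simp add: power2_eq_square)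
  qed
  then have "q * N + q * N * (\<Sum>k<T. k) \<le> q * N * (1 + T^2)"
    by (simp add: algebra_simps)
  finally show ?thesis unfolding S_def Q_def P_def ans_def q_def N_def by simp
qed


lemma main_bound:
  fixes R :: "nat ring" and A :: "det_alg pmf"
  assumes fld: "field R" and fin: "finite (carrier R)" and q8: "8 \<le> card (carrier R)"
    and sol: "hls_solves R T A"
  shows "1/2 * sqrt (real (card (carrier R))) \<le> real T"
proof -
  have dom: "domain R" using fld field.axioms(1) by blast
  define Q where "Q = carrier R"
  define P where "P = {\<pi>. \<pi> permutes Q}"
  define q where "q = card Q"
  define N where "N = card P"
  define run where "run = (\<lambda>x D. hls_run (hls_box R (fst x) (snd x)) T D)"
  define X where "X = (\<lambda>x. {D. run x D = fst x})"
  define Sd where "Sd = (\<lambda>D. {(s,\<pi>) \<in> Q \<times> P. snd D (hls_answers (hls_box R s \<pi>) D T) = s})"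
  have finP: "finite P" unfolding P_def Q_def using fin finite_permutations by blast
  have finQ: "finite Q" using fin Q_def by simp
  have finQP: "finite (Q \<times> P)" using finP finQ by simp
  have Npos: "N > 0" unfolding N_def using finP permutes_id[of Q] card_gt_0_iff unfolding P_def by blast
  show ?thesis
  proof (cases "q \<le> T^2")
    case True
    then have "real q \<le> (real T)^2" by (metis of_nat_le_iff of_nat_power)
    then have "sqrt (real q) \<le> sqrt ((real T)^2)" by (rule real_sqrt_le_mono)
    then have "sqrt (real q) \<le> real T" by (simp add: real_sqrt_abs)
    then show ?thesis unfolding q_def Q_def by simp
  next
    case False
    then have qT: "T^2 < q" by simp
    have half: "1/2 \<le> measure_pmf.prob A (X x)" if x: "x \<in> Q \<times> P" for x
    proof -
      have "bij_betw (snd x) Q Q" using x permutes_imp_bij unfolding P_def by auto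
      then have "measure_pmf.prob A {D. hls_run (hls_box R (fst x) (snd x)) T D \<noteq> fst x} \<le> 1/2"
        using sol x unfolding hls_solves_def Q_def by auto
      moreover have "X x = UNIV - {D. hls_run (hls_box R (fst x) (snd x)) T D \<noteq> fst x}"
        unfolding X_def run_def by auto
      ultimately show ?thesis using measure_pmf.prob_compl[of "{D. hls_run (hls_box R (fst x) (snd x)) T D \<noteq> fst x}" A]
        by simp
    qed
    have intI: "integrable (measure_pmf A) (indicator (X x) :: det_alg \<Rightarrow> real)" for x
      by (simp add: integrable_indicator_iff less_top[symmetric])
    have "real (card (Q \<times> P)) / 2 = (\<Sum>x\<in>Q \<times> P. 1/2)" by simp
    also have "\<dots> \<le> (\<Sum>x\<in>Q \<times> P. measure_pmf.prob A (X x))" by (rule sum_mono) (rule half)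
    also have "\<dots> = (\<Sum>x\<in>Q \<times> P. integral\<^sup>L (measure_pmf A) (indicator (X x)))" by simp
    also have "\<dots> = integral\<^sup>L (measure_pmf A) (\<lambda>D. \<Sum>x\<in>Q \<times> P. indicator (X x) D)"
      by (subst Bochner_Integration.integral_sum) (auto intro: intI)
    also have "\<dots> \<le> integral\<^sup>L (measure_pmf A) (\<lambda>D. real (q * N * (1 + T^2)) / real (q - T^2))"
    proof (rule integral_mono)
      show "integrable (measure_pmf A) (\<lambda>D. \<Sum>x\<in>Q \<times> P. indicator (X x) D :: real)"
        by (rule Bochner_Integration.integrable_sum) (rule intI)
      show "integrable (measure_pmf A) (\<lambda>D. real (q * N * (1 + T^2)) / real (q - T^2))" by simp
      fix D
      have "(\<Sum>x\<in>Q \<times> P. indicator (X x) D :: real) = (\<Sum>x\<in>Q \<times> P. if x \<in> Sd D then 1 else 0)"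
        by (intro sum.cong refl) (auto simp: indicator_def X_def Sd_def run_def hls_run_def)
      also have "\<dots> = real (card (Sd D))"
      proof -
        have "Sd D \<subseteq> Q \<times> P" unfolding Sd_def by auto
        then show ?thesis using finQP by (simp add: sum.If_cases Int_absorb1)
      qed
      finally have e: "(\<Sum>x\<in>Q \<times> P. indicator (X x) D :: real) = real (card (Sd D))" .
      have "card (Sd D) * (q - T^2) \<le> q * N * (1 + T^2)"
        using count_S[OF dom fin, of D T] unfolding Sd_def Q_def P_def q_def N_def by simp
      then have "real (card (Sd D)) * real (q - T^2) \<le> real (q * N * (1 + T^2))"
        by (metis of_nat_le_iff of_nat_mult)
      moreover have "real (q - T^2) > 0" using qT by simp
      ultimately have "real (card (Sd D)) \<le> real (q * N * (1 + T^2)) / real (q - T^2)"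
        by (simp add: field_simps)
      then show "(\<Sum>x\<in>Q \<times> P. indicator (X x) D :: real) \<le> real (q * N * (1 + T^2)) / real (q - T^2)"
        using e by simp
    qed
    also have "\<dots> = real (q * N * (1 + T^2)) / real (q - T^2)" by simp
    finally have ineq: "real (q * N) / 2 \<le> real (q * N * (1 + T^2)) / real (q - T^2)"
      unfolding q_def N_def by (simp add: card_cartesian_product)
    have qpos: "real (q - T^2) > 0" using qT by simp
    have qN: "real (q * N) > 0" using Npos q8 unfolding q_def Q_def by simp
    have "real (q * N) * real (q - T^2) \<le> 2 * real (q * N * (1 + T^2))"
      using ineq qpos by (simp add: field_simps)
    then have "real (q * N) * real (q - T^2) \<le> real (q * N) * (2 * (1 + real T ^ 2))"
      by (simp add: algebra_simps)
    then have "real (q - T^2) \<le> 2 * (1 + real T ^ 2)"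
      using qN by (simp add: mult_le_cancel_left_pos)
    then have "real q \<le> 2 + 3 * real T ^ 2" using qT by (simp add: of_nat_diff)
    moreover have "8 \<le> real q" using q8 unfolding q_def Q_def by simp
    ultimately have "real q \<le> (2 * real T)^2" by (simp add: power_mult_distrib)
    then have "sqrt (real q) \<le> sqrt ((2 * real T)^2)" by (rule real_sqrt_le_mono)
    then have "sqrt (real q) \<le> 2 * real T" by (simp only: real_sqrt_abs)
    then show ?thesis unfolding q_def Q_def by simp
  qed
qed

theorem theorem3:
  "\<exists>c::real > 0. \<exists>q0::nat. \<forall>(R::nat ring) (T::nat) (A::det_alg pmf).
     field R \<longrightarrow> finite (carrier R) \<longrightarrow> card (carrier R) \<ge> q0 \<longrightarrow>
     hls_solves R T A \<longrightarrow> c * sqrt (real (card (carrier R))) \<le> real T"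
proof (intro exI[of _ "1/2"] conjI exI[of _ 8] allI impI)
  show "(0::real) < 1/2" by simp
next
  fix R :: "nat ring" and T :: nat and A :: "det_alg pmf"
  assume "field R" "finite (carrier R)" "8 \<le> card (carrier R)" "hls_solves R T A"
  then show "1/2 * sqrt (real (card (carrier R))) \<le> real T" by (rule main_bound)
qed


end
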